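(* Let $\varPhi:\mathbb{R}^k\times\mathbb{R}^l\to\mathbb{R}^p$ be continuously differentiable, $\Omega\subset\mathbb{R}^k$ closed, $T:\mathbb{R}^l\rightrightarrows\mathbb{R}^q$ outer semicontinuous, and let $(\bar x,\bar\sigma)$ satisfy $\varPhi(\bar x,\bar\sigma)=0$, $\bar x\in\Omega$, $0\in T(\bar\sigma)$. Define $G:\mathbb{R}^k\times\mathbb{R}^l\to\mathbb{R}^{k+p+q}$, $G(x,\sigma):=(-x,\varPhi(x,\sigma),0)$, and $\mathcal{P}:\mathbb{R}^k\times\mathbb{R}^l\rightrightarrows\mathbb{R}^{k+p+q}$, $\mathcal{P}(x,\sigma):=\Omega\times\{0\}\times T(\sigma)$. The following are equivalent: (a) $G+\mathcal{P}$ is metrically regular around $((\bar x,\bar\sigma),(0,0,0))$; (b) for $z\in\mathbb{R}^p$, $\nu\in\mathbb{R}^q$: $\big[0\in\nabla_x\varPhi(\bar x,\bar\sigma)z+N_\Omega(\bar x)$ and $0\in\nabla_\sigma\varPhi(\bar x,\bar\sigma)z+D^*T(\bar\sigma|0)(\nu)\big]\Longrightarrow z=0,\ \nu=0$; (c) $T$ is metrically regular around $(\bar\sigma,0)$, and for $z\in\mathbb{R}^p$: $\big[0\in\nabla_x\varPhi(\bar x,\bar\sigma)z+N_\Omega(\bar x)$ and $0\in\nabla_\sigma\varPhi(\bar x,\bar\sigma)z+\mathrm{rge}\,D^*T(\bar\sigma|0)\big]\Longrightarrow z=0$.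
   Context: $\nabla_x\varPhi(x,\sigma)$ ($k\times p$) and $\nabla_\sigma\varPhi(x,\sigma)$ ($l\times p$) are the transposed partial Jacobians. Outer semicontinuity means closed graph. Tangent cone $T_Z(x):=\limsup_{\tau\searrow0}(Z-x)/\tau$; limiting normal cone $N_Z(\bar x):=\limsup_{x\to\bar x,x\in Z}T_Z(x)^\circ$ ($K^\circ$ polar). Coderivative $D^*S(\bar u|\bar y)(z):=\{v\mid(v,-z)\in N_{\mathrm{gph}\,S}(\bar u,\bar y)\}$; $\mathrm{rge}\,D^*S(\bar u|\bar y):=\bigcup_zD^*S(\bar u|\bar y)(z)$. $S$ is metrically regular around $(\bar u,\bar y)\in\mathrm{gph}\,S$ if there are $c,\varepsilon>0$ with $\mathrm{dist}[u,S^{-1}(y)]\le c\,\mathrm{dist}[y,S(u)]$ for all $(u,y)\in(\bar u,\bar y)+\varepsilon\mathbb{B}$. *)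

theory Defs
  imports "HOL-Analysis.Analysis"
begin

definition gph :: "('a \<Rightarrow> 'b set) \<Rightarrow> ('a \<times> 'b) set" where
  "gph S = {(u, y). y \<in> S u}"

definition outer_semicontinuous :: "('a::topological_space \<Rightarrow> 'b::topological_space set) \<Rightarrow> bool" where
  "outer_semicontinuous S \<longleftrightarrow> closed (gph S)"

text \<open>Tangent cone T_Z(x) = limsup_{tau \<searrow> 0} (Z - x)/tau (Painleve-Kuratowski outer limit).\<close>
definition tangent_cone :: "'a::real_normed_vector set \<Rightarrow> 'a \<Rightarrow> 'a set" where
  "tangent_cone Z x = {w. \<exists>\<tau> :: nat \<Rightarrow> real. \<exists>ws :: nat \<Rightarrow> 'a.
      (\<forall>n. \<tau> n > 0) \<and> \<tau> \<longlonglongrightarrow> 0 \<and> ws \<longlonglongrightarrow> w \<and> (\<forall>n. x + \<tau> n *\<^sub>R ws n \<in> Z)}"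

definition polar :: "'a::real_inner set \<Rightarrow> 'a set" where
  "polar K = {v. \<forall>w\<in>K. v \<bullet> w \<le> 0}"

text \<open>Limiting normal cone N_Z(xbar) = limsup_{x \<rightarrow> xbar, x \<in> Z} T_Z(x)\<degree>.\<close>
definition normal_cone :: "'a::real_inner set \<Rightarrow> 'a \<Rightarrow> 'a set" where
  "normal_cone Z xb = {v. \<exists>xs :: nat \<Rightarrow> 'a. \<exists>vs :: nat \<Rightarrow> 'a.
      (\<forall>n. xs n \<in> Z) \<and> xs \<longlonglongrightarrow> xb \<and> vs \<longlonglongrightarrow> v \<and> (\<forall>n. vs n \<in> polar (tangent_cone Z (xs n)))}"

definition coderiv :: "('a::real_inner \<Rightarrow> 'b::real_inner set) \<Rightarrow> 'a \<Rightarrow> 'b \<Rightarrow> 'b \<Rightarrow> 'a set" where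
  "coderiv S u y z = {v. (v, - z) \<in> normal_cone (gph S) (u, y)}"

definition coderiv_range :: "('a::real_inner \<Rightarrow> 'b::real_inner set) \<Rightarrow> 'a \<Rightarrow> 'b \<Rightarrow> 'a set" where
  "coderiv_range S u y = (\<Union>z. coderiv S u y z)"

text \<open>Distance to the empty set is +\<infinity> (the library's
  infdist gives 0 there), so: if S u is empty the right-hand side is +\<infinity> and nothing is
  required; otherwise S^{-1}(y) must be nonempty and the usual inequality must hold.\<close>
definition metric_regular :: "('a::metric_space \<Rightarrow> 'b::metric_space set) \<Rightarrow> 'a \<Rightarrow> 'b \<Rightarrow> bool" where
  "metric_regular S ub yb \<longleftrightarrow> (\<exists>c>0. \<exists>\<epsilon>>0. \<forall>u y. (u, y) \<in> cball (ub, yb) \<epsilon> \<longrightarrow> S u \<noteq> {} \<longrightarrow>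
      {x. y \<in> S x} \<noteq> {} \<and> infdist u {x. y \<in> S x} \<le> c * infdist y (S u))"

definition C1_map :: "('a::real_normed_vector \<Rightarrow> 'b::real_normed_vector) \<Rightarrow> bool" where
  "C1_map f \<longleftrightarrow> (\<exists>D :: 'a \<Rightarrow> ('a \<Rightarrow>\<^sub>L 'b). (\<forall>w. (f has_derivative blinfun_apply (D w)) (at w))
                       \<and> continuous_on UNIV D)"

definition grad_x :: "('a::real_inner \<times> 'b::real_inner \<Rightarrow> 'c::real_inner) \<Rightarrow> 'a \<Rightarrow> 'b \<Rightarrow> 'c \<Rightarrow> 'a" where
  "grad_x \<Phi> x s = adjoint (\<lambda>h. frechet_derivative \<Phi> (at (x, s)) (h, 0))"

definition grad_s :: "('a::real_inner \<times> 'b::real_inner \<Rightarrow> 'c::real_inner) \<Rightarrow> 'a \<Rightarrow> 'b \<Rightarrow> 'c \<Rightarrow> 'b" where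
  "grad_s \<Phi> x s = adjoint (\<lambda>h. frechet_derivative \<Phi> (at (x, s)) (0, h))"

end

theory Submission
  imports Defs
begin

lemma polar_scale: "v \<in> polar K \<Longrightarrow> 0 \<le> c \<Longrightarrow> c *\<^sub>R v \<in> polar K"
  unfolding polar_def by (auto simp: mult_nonneg_nonpos)

lemma polar_zero[simp]: "0 \<in> polar K"
  unfolding polar_def by auto

lemma norm_divR: "(t::real) > 0 \<Longrightarrow> norm (X /\<^sub>R t) = norm X / t"
  by (simp only: norm_scaleR) (simp add: divide_inverse mult.commute)

lemma deriv_seq:
  fixes f :: "'a::real_normed_vector \<Rightarrow> 'b::real_normed_vector"
  assumes fd: "(f has_derivative f') (at p)"
    and tp: "\<forall>n. \<tau> n > 0" and t0: "\<tau> \<longlonglongrightarrow> 0" and hh: "hs \<longlonglongrightarrow> h"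
  shows "(\<lambda>n. (f (p + \<tau> n *\<^sub>R hs n) - f p) /\<^sub>R \<tau> n) \<longlonglongrightarrow> f' h"
proof -
  have bl: "bounded_linear f'" using fd by (simp add: has_derivative_at_alt)
  have E: "(\<lambda>n. (f (p + \<tau> n *\<^sub>R hs n) - f p - f' (\<tau> n *\<^sub>R hs n)) /\<^sub>R \<tau> n) \<longlonglongrightarrow> 0"
  proof (rule LIMSEQ_I)
    fix r :: real assume r: "r > 0"
    obtain M where M: "\<forall>n. norm (hs n) \<le> M" "M > 0"
      using convergent_imp_bounded[of hs] hh unfolding convergent_def bounded_pos
      by (metis dist_0_norm image_eqI UNIV_I bounded_iff bounded_pos)
    define e where "e = r / (2*M)"
    have e: "e > 0" using r M by (simp add: e_def)
    obtain d where d: "d > 0" "\<forall>y. norm (y - p) < d \<longrightarrow> norm (f y - f p - f' (y - p)) \<le> e * norm (y - p)"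
      using fd e unfolding has_derivative_at_alt by blast
    have "eventually (\<lambda>n. \<tau> n < d / M) sequentially"
      using t0 d M by (intro order_tendstoD(2)) auto
    then obtain N where N: "\<And>n. n \<ge> N \<Longrightarrow> \<tau> n < d / M" by (auto simp: eventually_sequentially)
    show "\<exists>no. \<forall>n\<ge>no. norm ((f (p + \<tau> n *\<^sub>R hs n) - f p - f' (\<tau> n *\<^sub>R hs n)) /\<^sub>R \<tau> n - 0) < r"
    proof (intro exI allI impI)
      fix n assume n: "n \<ge> N"
      have tn: "\<tau> n > 0" using tp by auto
      have nh: "norm (\<tau> n *\<^sub>R hs n) \<le> \<tau> n * M" using M tn by (simp add: mult_left_mono)
      have "\<tau> n * M < d" using N[OF n] M by (simp add: field_simps)
      hence "norm ((p + \<tau> n *\<^sub>R hs n) - p) < d" using nh by simp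
      hence "norm (f (p + \<tau> n *\<^sub>R hs n) - f p - f' (\<tau> n *\<^sub>R hs n)) \<le> e * norm (\<tau> n *\<^sub>R hs n)"
        using d(2) by (metis add_diff_cancel_left')
      also have "\<dots> \<le> e * (\<tau> n * M)" using nh e by (simp add: mult_left_mono)
      finally have X: "norm (f (p + \<tau> n *\<^sub>R hs n) - f p - f' (\<tau> n *\<^sub>R hs n)) \<le> (e * M) * \<tau> n"
        by (simp add: field_simps)
      have "norm ((f (p + \<tau> n *\<^sub>R hs n) - f p - f' (\<tau> n *\<^sub>R hs n)) /\<^sub>R \<tau> n)
          = norm (f (p + \<tau> n *\<^sub>R hs n) - f p - f' (\<tau> n *\<^sub>R hs n)) / \<tau> n"
        using tn by (rule norm_divR)
      also have "\<dots> \<le> e * M" using X tn by (simp add: divide_le_eq)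
      finally have "norm ((f (p + \<tau> n *\<^sub>R hs n) - f p - f' (\<tau> n *\<^sub>R hs n)) /\<^sub>R \<tau> n) \<le> e * M" .
      also have "e * M < r" using r M by (simp add: e_def)
      finally show "norm ((f (p + \<tau> n *\<^sub>R hs n) - f p - f' (\<tau> n *\<^sub>R hs n)) /\<^sub>R \<tau> n - 0) < r" by simp
    qed
  qed
  have L: "(\<lambda>n. f' (hs n)) \<longlonglongrightarrow> f' h" using bl hh by (rule bounded_linear.tendsto)
  have eq: "\<And>n. (f (p + \<tau> n *\<^sub>R hs n) - f p) /\<^sub>R \<tau> n
      = (f (p + \<tau> n *\<^sub>R hs n) - f p - f' (\<tau> n *\<^sub>R hs n)) /\<^sub>R \<tau> n + f' (hs n)"
    using tp bl by (simp add: linear_simps bounded_linear.linear scaleR_diff_right less_imp_neq[THEN not_sym])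
  show ?thesis unfolding eq using tendsto_add[OF E L] by simp
qed

lemma fermat_tangent:
  fixes F :: "'a::real_normed_vector \<Rightarrow> real"
  assumes fd: "(F has_derivative F') (at w)" and min: "\<forall>w'\<in>C. F w \<le> F w'"
    and t: "t \<in> tangent_cone C w"
  shows "F' t \<ge> 0"
proof -
  obtain \<tau> ws where tw: "\<forall>n. \<tau> n > 0" "\<tau> \<longlonglongrightarrow> 0" "ws \<longlonglongrightarrow> t" "\<forall>n. w + \<tau> n *\<^sub>R ws n \<in> C"
    using t unfolding tangent_cone_def by blast
  have lim: "(\<lambda>n. (F (w + \<tau> n *\<^sub>R ws n) - F w) /\<^sub>R \<tau> n) \<longlonglongrightarrow> F' t"
    using deriv_seq[OF fd tw(1,2,3)] .
  have "\<forall>n. 0 \<le> (F (w + \<tau> n *\<^sub>R ws n) - F w) /\<^sub>R \<tau> n"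
  proof
    fix n
    have a: "F w \<le> F (w + \<tau> n *\<^sub>R ws n)" using min tw(4) by auto
    have b: "\<tau> n > 0" using tw(1) by auto
    show "0 \<le> (F (w + \<tau> n *\<^sub>R ws n) - F w) /\<^sub>R \<tau> n"
      using a b by (simp add: zero_le_mult_iff)
  qed
  then show ?thesis using lim by (intro LIMSEQ_le_const) auto
qed


lemma dist_pair_le: "dist (a, b) (c, d) \<le> dist a c + dist b d"
  by (simp add: dist_Pair_Pair sqrt_sum_squares_le_sum)

lemma dist_pair_ge1: "dist a c \<le> dist (a, b) (c, d)"
  using dist_fst_le[of "(a,b)" "(c,d)"] by simp

lemma dist_pair_ge2: "dist b d \<le> dist (a, b) (c, d)"
  using dist_snd_le[of "(a,b)" "(c,d)"] by simp

lemma seq_to_by_dist: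
  assumes "\<forall>n. dist (W n) x \<le> 1 / real (Suc n)"
  shows "W \<longlonglongrightarrow> x"
proof -
  have "(\<lambda>n. dist (W n) x) \<longlonglongrightarrow> 0"
    using assms by (intro Lim_null_comparison[OF _ LIMSEQ_inverse_real_of_nat]) (auto simp: divide_inverse)
  thus ?thesis by (subst tendsto_dist_iff)
qed

lemma lemA:
  fixes S :: "'a::euclidean_space \<Rightarrow> 'b::euclidean_space set"
  assumes ker: "\<And>b. (0, b) \<in> normal_cone (gph S) (ub, yb) \<Longrightarrow> b = 0"
  shows "\<exists>c>0. \<exists>\<delta>>0. \<forall>u v a b. (u,v) \<in> gph S \<longrightarrow> dist (u,v) (ub,yb) \<le> \<delta>
           \<longrightarrow> (a,b) \<in> polar (tangent_cone (gph S) (u,v)) \<longrightarrow> norm b \<le> c * norm a"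
proof (rule ccontr)
  assume H0: "\<not> ?thesis"
  have "\<forall>n. \<exists>q. fst q \<in> gph S \<and> dist (fst q) (ub,yb) \<le> 1 / real (Suc n)
       \<and> snd q \<in> polar (tangent_cone (gph S) (fst q)) \<and> norm (snd (snd q)) > real (Suc n) * norm (fst (snd q))"
  proof
    fix n
    have H1: "\<forall>c>0. \<forall>\<delta>>0. \<not> (\<forall>u v a b. (u,v) \<in> gph S \<longrightarrow> dist (u,v) (ub,yb) \<le> \<delta>
           \<longrightarrow> (a,b) \<in> polar (tangent_cone (gph S) (u,v)) \<longrightarrow> norm b \<le> c * norm a)"
      using H0 by blast
    have p1: "real (Suc n) > 0" and p2: "1 / real (Suc n) > 0" by simp_all
    have "\<not> (\<forall>u v a b. (u,v) \<in> gph S \<longrightarrow> dist (u,v) (ub,yb) \<le> 1 / real (Suc n)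
           \<longrightarrow> (a,b) \<in> polar (tangent_cone (gph S) (u,v)) \<longrightarrow> norm b \<le> real (Suc n) * norm a)"
      using H1 p1 p2 by blast
    then obtain u v a b where "(u,v) \<in> gph S" "dist (u,v) (ub,yb) \<le> 1 / real (Suc n)"
      "(a,b) \<in> polar (tangent_cone (gph S) (u,v))" "\<not> norm b \<le> real (Suc n) * norm a" by blast
    thus "\<exists>q. fst q \<in> gph S \<and> dist (fst q) (ub,yb) \<le> 1 / real (Suc n)
       \<and> snd q \<in> polar (tangent_cone (gph S) (fst q)) \<and> norm (snd (snd q)) > real (Suc n) * norm (fst (snd q))"
      by (intro exI[of _ "((u,v),(a,b))"]) auto
  qed
  from choice[OF this] obtain f where f0: "\<forall>n. fst (f n) \<in> gph S \<and> dist (fst (f n)) (ub,yb) \<le> 1 / real (Suc n)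
       \<and> snd (f n) \<in> polar (tangent_cone (gph S) (fst (f n))) \<and> norm (snd (snd (f n))) > real (Suc n) * norm (fst (snd (f n)))"
    by blast
  have f: "\<And>n. fst (f n) \<in> gph S" "\<And>n. dist (fst (f n)) (ub,yb) \<le> 1 / real (Suc n)"
    "\<And>n. snd (f n) \<in> polar (tangent_cone (gph S) (fst (f n)))"
    "\<And>n. norm (snd (snd (f n))) > real (Suc n) * norm (fst (snd (f n)))"
    using f0 by auto
  define W where "W n = fst (f n)" for n
  define A where "A n = fst (snd (f n))" for n
  define B where "B n = snd (snd (f n))" for n
  have Bpos: "norm (B n) > 0" for n
  proof -
    have "0 \<le> real (Suc n) * norm (A n)" by simp
    thus ?thesis using f(4)[of n] unfolding A_def B_def by linarith
  qed
  define \<beta> where "\<beta> n = B n /\<^sub>R norm (B n)" for n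
  define \<alpha> where "\<alpha> n = A n /\<^sub>R norm (B n)" for n
  have bs: "\<forall>n. \<beta> n \<in> sphere 0 1" using Bpos by (simp add: \<beta>_def)
  obtain l r where l: "l \<in> sphere 0 1" "strict_mono r" "(\<beta> \<circ> r) \<longlonglongrightarrow> l"
    using seq_compactE[OF compact_imp_seq_compact[OF compact_sphere] bs] by blast
  have an: "norm (\<alpha> n) \<le> 1 / real (Suc n)" for n
  proof -
    have "norm (\<alpha> n) = norm (A n) / norm (B n)" unfolding \<alpha>_def by (rule norm_divR[OF Bpos])
    also have "\<dots> \<le> 1 / real (Suc n)"
      using f(4)[of n] Bpos[of n] unfolding A_def B_def by (simp add: divide_le_eq field_simps)
    finally show ?thesis .
  qed
  have a0: "\<alpha> \<longlonglongrightarrow> 0" using an by (intro seq_to_by_dist) (simp add: dist_norm)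
  have W0: "W \<longlonglongrightarrow> (ub,yb)" using f(2) unfolding W_def by (intro seq_to_by_dist) simp
  have "(0, l) \<in> normal_cone (gph S) (ub, yb)"
    unfolding normal_cone_def
  proof (intro CollectI exI conjI allI)
    show "(W \<circ> r) n \<in> gph S" for n using f(1) by (simp add: W_def)
    show "(W \<circ> r) \<longlonglongrightarrow> (ub, yb)" using LIMSEQ_subseq_LIMSEQ[OF W0 l(2)] .
    show "(\<lambda>n. (\<alpha> (r n), \<beta> (r n))) \<longlonglongrightarrow> (0, l)"
      using tendsto_Pair[OF LIMSEQ_subseq_LIMSEQ[OF a0 l(2)] l(3)] by (simp add: o_def)
    show "(\<alpha> (r n), \<beta> (r n)) \<in> polar (tangent_cone (gph S) ((W \<circ> r) n))" for n
    proof -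
      have "(\<alpha> (r n), \<beta> (r n)) = inverse (norm (B (r n))) *\<^sub>R snd (f (r n))"
        by (simp add: \<alpha>_def \<beta>_def A_def B_def prod_eq_iff)
      thus ?thesis using polar_scale[OF f(3)[of "r n"], of "inverse (norm (B (r n)))"]
        by (simp add: W_def)
    qed
  qed
  hence "l = 0" by (rule ker)
  thus False using l(1) by simp
qed


lemma gph_iff: "(u, v) \<in> gph S \<longleftrightarrow> v \<in> S u"
  by (simp add: gph_def)

lemma closed_fiber_inv:
  fixes S :: "'a::real_normed_vector \<Rightarrow> 'b::real_normed_vector set"
  assumes "closed (gph S)" shows "closed {x. y \<in> S x}"
proof -
  have e: "{x. y \<in> S x} = (\<lambda>x. (x, y)) -` gph S" by (auto simp: gph_def)
  have "continuous_on UNIV (\<lambda>x::'a. (x, y))" by (intro continuous_intros)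
  from closed_vimage[OF assms this] show ?thesis unfolding e .
qed

lemma closed_fiber:
  fixes S :: "'a::real_normed_vector \<Rightarrow> 'b::real_normed_vector set"
  assumes "closed (gph S)" shows "closed (S u)"
proof -
  have e: "S u = (\<lambda>y. (u, y)) -` gph S" by (auto simp: gph_def)
  have "continuous_on UNIV (\<lambda>y::'b. (u, y))" by (intro continuous_intros)
  from closed_vimage[OF assms this] show ?thesis unfolding e .
qed

lemma mr_nec_pt:
  fixes S :: "'a::euclidean_space \<Rightarrow> 'b::euclidean_space set"
  assumes cl: "closed (gph S)" and c: "c > 0" and e: "\<epsilon> > 0"
    and mr: "\<forall>u y. (u, y) \<in> cball (ub, yb) \<epsilon> \<longrightarrow> S u \<noteq> {} \<longrightarrow>
      {x. y \<in> S x} \<noteq> {} \<and> infdist u {x. y \<in> S x} \<le> c * infdist y (S u)"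
    and w: "(u,v) \<in> gph S" and d: "dist (u,v) (ub,yb) \<le> \<epsilon>/2"
    and ab: "(a,b) \<in> polar (tangent_cone (gph S) (u,v))"
  shows "norm b \<le> c * norm a"
proof (cases "b = 0")
  case True thus ?thesis using c by simp
next
  case False
  have nb: "norm b > 0" using False by simp
  define s where "s = \<epsilon> / (2 * (norm b + 1))"
  have nb1: "norm b + 1 > 0" using norm_ge_zero[of b] by linarith
  hence "2 * (norm b + 1) > 0" by simp
  hence s: "s > 0" unfolding s_def using e by (intro divide_pos_pos)
  define t where "t j = s / real (Suc j)" for j
  have tpos: "t j > 0" for j using s by (simp add: t_def)
  have tle: "t j \<le> s" for j using s by (simp add: t_def divide_le_eq)
  have teq: "t = (\<lambda>j. s * inverse (real (Suc j)))" by (auto simp: t_def divide_inverse)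
  have t0: "t \<longlonglongrightarrow> 0"
    unfolding teq by (rule tendsto_mult_right_zero[OF LIMSEQ_inverse_real_of_nat])
  have sb: "s * norm b \<le> \<epsilon>/2"
  proof -
    have "s * norm b = (\<epsilon>/2) * (norm b / (norm b + 1))" unfolding s_def by simp
    also have "\<dots> \<le> (\<epsilon>/2) * 1"
      using e nb1 by (intro mult_left_mono) (auto simp: divide_le_eq)
    finally show ?thesis by simp
  qed
  have vu: "v \<in> S u" using w by (simp add: gph_iff)
  have "\<forall>j. \<exists>x. v + t j *\<^sub>R b \<in> S x \<and> dist u x \<le> c * (t j * norm b)"
  proof
    fix j
    define y where "y = v + t j *\<^sub>R b"
    have d2: "dist (u,v) (u,y) = t j * norm b"
      using tpos[of j] by (simp add: y_def dist_Pair_Pair dist_norm)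
    have "dist (ub,yb) (u, y) \<le> dist (ub,yb) (u,v) + dist (u,v) (u,y)" by (rule dist_triangle)
    also have "\<dots> \<le> \<epsilon>/2 + s * norm b"
    proof -
      have "t j * norm b \<le> s * norm b" using tle[of j] by (simp add: mult_right_mono)
      thus ?thesis using d d2 by (simp add: dist_commute)
    qed
    also have "\<dots> \<le> \<epsilon>" using sb by simp
    finally have inb: "(u, y) \<in> cball (ub, yb) \<epsilon>" by simp
    have Su: "S u \<noteq> {}" using vu by auto
    have ne: "{x. y \<in> S x} \<noteq> {}" and id: "infdist u {x. y \<in> S x} \<le> c * infdist y (S u)"
      using mr inb Su by auto
    have "infdist y (S u) \<le> dist y v" using vu by (rule infdist_le)
    also have "dist y v = t j * norm b" using tpos[of j] by (simp add: y_def dist_norm)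
    finally have "infdist y (S u) \<le> t j * norm b" .
    hence "infdist u {x. y \<in> S x} \<le> c * (t j * norm b)"
    proof -
      have "c * infdist y (S u) \<le> c * (t j * norm b)"
        using c \<open>infdist y (S u) \<le> t j * norm b\<close> by (simp add: mult_left_mono)
      thus ?thesis using id by linarith
    qed
    moreover obtain x where "x \<in> {x. y \<in> S x}" "infdist u {x. y \<in> S x} = dist u x"
      using infdist_attains_inf[OF closed_fiber_inv[OF cl] ne] by blast
    ultimately show "\<exists>x. v + t j *\<^sub>R b \<in> S x \<and> dist u x \<le> c * (t j * norm b)"
      unfolding y_def by auto
  qed
  from choice[OF this] obtain x where x: "\<forall>j. v + t j *\<^sub>R b \<in> S (x j) \<and> dist u (x j) \<le> c * (t j * norm b)"
    by blast
  define h where "h j = (x j - u) /\<^sub>R t j" for j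
  have hb: "h j \<in> cball 0 (c * norm b)" for j
  proof -
    have "norm (h j) = norm (x j - u) / t j" unfolding h_def by (rule norm_divR[OF tpos])
    also have "norm (x j - u) = dist u (x j)" by (simp add: dist_norm norm_minus_commute)
    finally have "norm (h j) = dist u (x j) / t j" .
    also have "\<dots> \<le> c * norm b" 
    proof -
      have "dist u (x j) \<le> c * (t j * norm b)" using x by blast
      also have "\<dots> = (c * norm b) * t j" by (simp add: mult_ac)
      finally show ?thesis using tpos[of j] by (simp only: pos_divide_le_eq)
    qed
    finally show ?thesis by (simp add: dist_norm)
  qed
  obtain l r where l: "l \<in> cball 0 (c * norm b)" "strict_mono r" "(h \<circ> r) \<longlonglongrightarrow> l"
    by (rule seq_compactE[OF compact_imp_seq_compact[OF compact_cball] allI[OF hb]])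
  have tang: "(l, b) \<in> tangent_cone (gph S) (u, v)"
    unfolding tangent_cone_def
  proof (intro CollectI exI conjI allI)
    show "(t \<circ> r) n > 0" for n using tpos by simp
    show "(t \<circ> r) \<longlonglongrightarrow> 0" using LIMSEQ_subseq_LIMSEQ[OF t0 l(2)] .
    show "(\<lambda>n. (h (r n), b)) \<longlonglongrightarrow> (l, b)"
      using tendsto_Pair[OF l(3) tendsto_const[of b]] by (simp add: o_def)
    show "(u, v) + (t \<circ> r) n *\<^sub>R (h (r n), b) \<in> gph S" for n
    proof -
      have "u + t (r n) *\<^sub>R h (r n) = x (r n)"
        using tpos[of "r n"] by (simp add: h_def)
      thus ?thesis using x by (simp add: gph_iff)
    qed
  qed
  have "(a, b) \<bullet> (l, b) \<le> 0" using ab tang unfolding polar_def by blast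
  hence "b \<bullet> b \<le> - (a \<bullet> l)" by (simp add: inner_Pair)
  also have "\<dots> \<le> norm a * norm l" using Cauchy_Schwarz_ineq2[of a l] by linarith
  also have "\<dots> \<le> norm a * (c * norm b)" using l(1) by (simp add: mult_left_mono)
  finally have "norm b * norm b \<le> (c * norm a) * norm b"
    by (simp add: power2_norm_eq_inner[symmetric] power2_eq_square mult_ac)
  thus ?thesis using nb by (simp add: mult_le_cancel_right)
qed

lemma mr_nec:
  fixes S :: "'a::euclidean_space \<Rightarrow> 'b::euclidean_space set"
  assumes cl: "closed (gph S)" and mr: "metric_regular S ub yb"
    and nb: "(0, b) \<in> normal_cone (gph S) (ub, yb)"
  shows "b = 0"
proof -
  obtain c \<epsilon> where c: "c > 0" and e: "\<epsilon> > 0" and H: "\<forall>u y. (u, y) \<in> cball (ub, yb) \<epsilon> \<longrightarrow> S u \<noteq> {} \<longrightarrow>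
      {x. y \<in> S x} \<noteq> {} \<and> infdist u {x. y \<in> S x} \<le> c * infdist y (S u)"
    using mr unfolding metric_regular_def by blast
  obtain xs vs where xs: "\<forall>n. xs n \<in> gph S" "xs \<longlonglongrightarrow> (ub, yb)" "vs \<longlonglongrightarrow> (0, b)"
    "\<forall>n. vs n \<in> polar (tangent_cone (gph S) (xs n))"
    using nb unfolding normal_cone_def by blast
  have "eventually (\<lambda>n. dist (xs n) (ub, yb) < \<epsilon>/2) sequentially"
    using xs(2) e by (intro tendstoD) auto
  hence ev: "eventually (\<lambda>n. norm (snd (vs n)) \<le> c * norm (fst (vs n))) sequentially"
  proof (rule eventually_mono)
    fix n assume "dist (xs n) (ub, yb) < \<epsilon>/2"
    thus "norm (snd (vs n)) \<le> c * norm (fst (vs n))"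
      using mr_nec_pt[OF cl c e H, of "fst (xs n)" "snd (xs n)" "fst (vs n)" "snd (vs n)"] xs(1,4)
      by simp
  qed
  have l1: "(\<lambda>n. norm (snd (vs n))) \<longlonglongrightarrow> norm b"
    using tendsto_norm[OF tendsto_snd[OF xs(3)]] by simp
  have l2: "(\<lambda>n. c * norm (fst (vs n))) \<longlonglongrightarrow> c * norm (0::'a)"
    using tendsto_mult_left[OF tendsto_norm[OF tendsto_fst[OF xs(3)]], of c] by simp
  have "norm b \<le> c * norm (0::'a)"
    using tendsto_le[OF trivial_limit_sequentially l2 l1 ev] .
  thus ?thesis by simp
qed


lemma mr_core:
  fixes S :: "'a::euclidean_space \<Rightarrow> 'b::euclidean_space set"
  assumes cl: "closed (gph S)" and c: "c > 0" and dl: "\<delta> > 0"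
    and A: "\<forall>u v a b. (u,v) \<in> gph S \<longrightarrow> dist (u,v) (ub,yb) \<le> \<delta>
           \<longrightarrow> (a,b) \<in> polar (tangent_cone (gph S) (u,v)) \<longrightarrow> norm b \<le> c * norm a"
    and L: "L = 1 / (2*c)"
    and v: "v \<in> S u" and eta: "\<eta> > 0"
    and bd: "dist u ub + dist v y / L + \<eta> + dist y yb + dist v y + L * \<eta> \<le> \<delta>"
  shows "\<exists>x. y \<in> S x \<and> L * dist x u \<le> dist v y + L * \<eta>"
proof -
  have Lp: "L > 0" using c by (simp add: L)
  have cL: "c * L = 1/2" using c by (simp add: L)
  define F where "F w = norm (snd w - y) + L * sqrt ((fst w - u) \<bullet> (fst w - u) + \<eta>\<^sup>2)" for w :: "'a \<times> 'b"
  have sq: "norm q \<le> sqrt (q \<bullet> q + \<eta>\<^sup>2)" for q :: 'a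
  proof -
    have "norm q = sqrt (q \<bullet> q)" by (rule norm_eq_sqrt_inner)
    also have "\<dots> \<le> sqrt (q \<bullet> q + \<eta>\<^sup>2)" by (intro real_sqrt_le_mono) simp
    finally show ?thesis .
  qed
  have Fuv: "F (u,v) = dist v y + L * \<eta>" using eta by (simp add: F_def dist_norm)
  have Fge1: "norm (snd w - y) \<le> F w" for w
    using Lp by (simp add: F_def)
  have Fge2: "L * norm (fst w - u) \<le> F w" for w
  proof -
    have "L * norm (fst w - u) \<le> L * sqrt ((fst w - u) \<bullet> (fst w - u) + \<eta>\<^sup>2)"
      using Lp sq by (simp add: mult_left_mono)
    thus ?thesis unfolding F_def by (simp add: add_increasing)
  qed
  have Fc: "continuous_on UNIV F" unfolding F_def by (intro continuous_intros)
  define K where "K = gph S \<inter> {w. F w \<le> F (u,v)}"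
  have Kcl: "closed K" unfolding K_def
    by (intro closed_Int cl closed_Collect_le Fc continuous_on_const)
  have Kb: "K \<subseteq> cball u (F (u,v) / L) \<times> cball y (F (u,v))"
  proof
    fix w assume "w \<in> K"
    hence Fw: "F w \<le> F (u,v)" by (simp add: K_def)
    have "L * norm (fst w - u) \<le> F (u,v)" using Fge2[of w] Fw by linarith
    hence "norm (fst w - u) \<le> F (u,v) / L" using Lp by (simp add: pos_le_divide_eq mult.commute)
    moreover have "norm (snd w - y) \<le> F (u,v)" using Fge1[of w] Fw by linarith
    ultimately show "w \<in> cball u (F (u,v) / L) \<times> cball y (F (u,v))"
      by (cases w) (simp add: dist_norm norm_minus_commute)
  qed
  have Kc: "compact K"
    using Kcl bounded_subset[OF bounded_Times[OF bounded_cball bounded_cball] Kb]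
    by (simp add: compact_eq_bounded_closed)
  have uvK: "(u,v) \<in> K" using v by (simp add: K_def gph_iff)
  hence Kne: "K \<noteq> {}" by blast
  obtain w where wK: "w \<in> K" and wmin: "\<forall>w'\<in>K. F w \<le> F w'"
    using continuous_attains_inf[OF Kc Kne continuous_on_subset[OF Fc subset_UNIV]] by blast
  have wmin2: "\<forall>w'\<in>gph S. F w \<le> F w'"
  proof
    fix w' assume w': "w' \<in> gph S"
    show "F w \<le> F w'"
    proof (cases "F w' \<le> F (u,v)")
      case True thus ?thesis using w' wmin by (simp add: K_def)
    next
      case False thus ?thesis using wK by (simp add: K_def)
    qed
  qed
  obtain x v' where wxv: "w = (x, v')" by (cases w)
  have Fw: "F w \<le> dist v y + L * \<eta>" using wK Fuv by (simp add: K_def)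
  have xg: "(x, v') \<in> gph S" using wK wxv by (simp add: K_def)
  have Fx: "L * dist x u \<le> dist v y + L * \<eta>"
    using Fge2[of w] Fw wxv by (simp add: dist_norm)
  show ?thesis
  proof (cases "v' = y")
    case True thus ?thesis using xg Fx by (auto simp: gph_iff)
  next
    case False
    have nz: "v' - y \<noteq> 0" using False by simp
    define \<rho> where "\<rho> = sqrt ((x - u) \<bullet> (x - u) + \<eta>\<^sup>2)"
    have r2: "(x - u) \<bullet> (x - u) + \<eta>\<^sup>2 > 0" using eta by (simp add: add_nonneg_pos)
    have rp: "\<rho> > 0" using r2 by (simp add: \<rho>_def)
    define F' where "F' h = snd h \<bullet> sgn (v' - y) + L * ((fst h \<bullet> (x - u) + (x - u) \<bullet> fst h) * (inverse \<rho> / 2))" for h :: "'a \<times> 'b"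
    have d0: "((\<lambda>w::'a\<times>'b. snd w - y) has_derivative (\<lambda>h. snd h)) (at (x, v'))"
      by (auto intro!: derivative_eq_intros)
    have d1: "((\<lambda>w::'a\<times>'b. norm (snd w - y)) has_derivative (\<lambda>h. snd h \<bullet> sgn (v' - y))) (at (x, v'))"
      using has_derivative_compose[OF d0 has_derivative_norm[of "snd (x, v') - y"]] nz by simp
    have d2: "((\<lambda>w::'a\<times>'b. (fst w - u) \<bullet> (fst w - u) + \<eta>\<^sup>2) has_derivative (\<lambda>h. fst h \<bullet> (x - u) + (x - u) \<bullet> fst h)) (at (x, v'))"
      by (auto intro!: derivative_eq_intros)
    have d3: "((\<lambda>w::'a\<times>'b. sqrt ((fst w - u) \<bullet> (fst w - u) + \<eta>\<^sup>2)) has_derivative (\<lambda>h. (fst h \<bullet> (x - u) + (x - u) \<bullet> fst h) * (inverse \<rho> / 2))) (at (x, v'))"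
      using DERIV_compose_FDERIV[OF DERIV_real_sqrt[of "(fst (x, v') - u) \<bullet> (fst (x, v') - u) + \<eta>\<^sup>2"] d2] r2
      by (simp add: \<rho>_def)
    have dF: "(F has_derivative F') (at w)"
      unfolding wxv F_def[abs_def] F'_def[abs_def]
      by (rule has_derivative_add[OF d1 has_derivative_mult_right[OF d3]])
    define a where "a = - (L * inverse \<rho>) *\<^sub>R (x - u)"
    define b where "b = - sgn (v' - y)"
    have pol: "(a, b) \<in> polar (tangent_cone (gph S) (x, v'))"
      unfolding polar_def
    proof
      show "\<forall>t\<in>tangent_cone (gph S) (x, v'). (a, b) \<bullet> t \<le> 0"
      proof
        fix t assume t: "t \<in> tangent_cone (gph S) (x, v')"
        have "F' t \<ge> 0" using fermat_tangent[OF dF wmin2] t wxv by simp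
        moreover have "(a, b) \<bullet> t = - F' t"
          by (cases t) (simp add: a_def b_def F'_def inner_Pair inner_commute algebra_simps)
        ultimately show "(a, b) \<bullet> t \<le> 0" by simp
      qed
    qed
    have dxu: "dist x u \<le> dist v y / L + \<eta>"
      using Fx Lp by (simp add: field_simps)
    have dvy: "dist v' y \<le> dist v y + L * \<eta>"
      using Fge1[of w] Fw wxv by (simp add: dist_norm)
    have "dist (x, v') (ub, yb) \<le> dist x ub + dist v' yb" by (rule dist_pair_le)
    also have "\<dots> \<le> (dist x u + dist u ub) + (dist v' y + dist y yb)"
      by (intro add_mono dist_triangle)
    also have "\<dots> \<le> \<delta>" using dxu dvy bd by linarith
    finally have near: "dist (x, v') (ub, yb) \<le> \<delta>" .
    have nb: "norm b = 1" using nz by (simp add: b_def norm_sgn)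
    have na: "norm a < L"
    proof -
      have "norm (x - u) < \<rho>"
      proof -
        have "norm (x - u) = sqrt ((x - u) \<bullet> (x - u))" by (rule norm_eq_sqrt_inner)
        also have "\<dots> < \<rho>" unfolding \<rho>_def using eta by (intro real_sqrt_less_mono) simp
        finally show ?thesis .
      qed
      hence "norm (x - u) / \<rho> < 1" using rp by simp
      moreover have "norm a = L * (norm (x - u) / \<rho>)"
        using Lp rp by (simp add: a_def divide_inverse mult_ac)
      ultimately show ?thesis using Lp by (metis mult.right_neutral mult_strict_left_mono)
    qed
    have "norm b \<le> c * norm a" using A xg near pol by blast
    also have "\<dots> < c * L" using na c by simp
    finally show ?thesis using nb cL by simp
  qed
qed


lemma mr_suff:
  fixes S :: "'a::euclidean_space \<Rightarrow> 'b::euclidean_space set"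
  assumes cl: "closed (gph S)" and y0: "yb \<in> S ub"
    and ker: "\<And>b. (0, b) \<in> normal_cone (gph S) (ub, yb) \<Longrightarrow> b = 0"
  shows "metric_regular S ub yb"
proof -
  obtain c \<delta> where c: "c > 0" and dl: "\<delta> > 0" and A: "\<forall>u v a b. (u,v) \<in> gph S \<longrightarrow> dist (u,v) (ub,yb) \<le> \<delta>
           \<longrightarrow> (a,b) \<in> polar (tangent_cone (gph S) (u,v)) \<longrightarrow> norm b \<le> c * norm a"
    using lemA[OF ker] by blast
  define L where "L = 1 / (2*c)"
  have Lp: "L > 0" using c by (simp add: L_def)
  define \<tau> where "\<tau> = \<delta> / (4 * (1 + 1/L))"
  define \<eta>0 where "\<eta>0 = \<delta> / (4 * (1 + L))"
  define \<epsilon> where "\<epsilon> = min (\<delta>/4) \<tau>"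
  define C where "C = 1/L + (\<epsilon> + \<epsilon>/L + \<eta>0) / \<tau>"
  have taup: "\<tau> > 0" using dl Lp by (simp add: \<tau>_def add_pos_pos)
  have etap: "\<eta>0 > 0" using dl Lp by (simp add: \<eta>0_def add_pos_pos)
  have ep: "\<epsilon> > 0" using dl taup by (simp add: \<epsilon>_def)
  have e1: "\<epsilon> \<le> \<delta>/4" and e2: "\<epsilon> \<le> \<tau>" by (simp_all add: \<epsilon>_def)
  have q1: "4 * (1 + 1/L) > 0" using Lp by (simp add: add_pos_pos)
  have "\<tau> * (4 * (1 + 1/L)) = \<delta>" unfolding \<tau>_def using q1 by simp
  hence "4 * \<tau> + 4 * (\<tau> / L) = \<delta>" by (simp add: algebra_simps)
  hence tau_eq: "\<tau> / L + \<tau> = \<delta>/4" by linarith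
  have q2: "4 * (1 + L) > 0" using Lp by (simp add: add_pos_pos)
  have "\<eta>0 * (4 * (1 + L)) = \<delta>" unfolding \<eta>0_def using q2 by simp
  hence "4 * \<eta>0 + 4 * (L * \<eta>0) = \<delta>" by (simp add: algebra_simps)
  hence eta_eq: "\<eta>0 + L * \<eta>0 = \<delta>/4" by linarith
  have Cp: "C > 0" using Lp ep etap taup unfolding C_def by (simp add: add_pos_pos)
  have C1: "1/L \<le> C" using ep etap taup Lp unfolding C_def by simp
  show ?thesis unfolding metric_regular_def
  proof (rule exI[of _ C], rule conjI[OF Cp], rule exI[of _ \<epsilon>], rule conjI[OF ep], intro allI impI)
    fix u y assume uy: "(u, y) \<in> cball (ub, yb) \<epsilon>" and Sne: "S u \<noteq> {}"
    have du: "dist u ub \<le> \<epsilon>" using uy dist_pair_ge1[of u ub y yb] by (simp add: dist_commute)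
    have dy: "dist y yb \<le> \<epsilon>" using uy dist_pair_ge2[of y yb u ub] by (simp add: dist_commute)
    obtain v where v: "v \<in> S u" and vd: "infdist y (S u) = dist y v"
      using infdist_attains_inf[OF closed_fiber[OF cl] Sne] by blast
    define D where "D = dist v y"
    have D0: "D \<ge> 0" by (simp add: D_def)
    have idD: "infdist y (S u) = D" using vd by (simp add: D_def dist_commute)
    show "{x. y \<in> S x} \<noteq> {} \<and> infdist u {x. y \<in> S x} \<le> C * infdist y (S u)"
    proof (cases "D \<le> \<tau>")
      case True
      have key: "\<exists>x. y \<in> S x \<and> dist u x \<le> D/L + \<eta>" if h: "0 < \<eta>" "\<eta> \<le> \<eta>0" for \<eta>
      proof -
        have "D / L \<le> \<tau> / L" using True Lp by (simp add: divide_right_mono)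
        moreover have "L * \<eta> \<le> L * \<eta>0" using h Lp by simp
        ultimately have "dist u ub + dist v y / L + \<eta> + dist y yb + dist v y + L * \<eta> \<le> \<delta>"
          using du dy True tau_eq eta_eq e1 h unfolding D_def by linarith
        from mr_core[OF cl c dl A L_def v h(1) this] obtain x where
          x: "y \<in> S x" "L * dist x u \<le> dist v y + L * \<eta>" by blast
        have "dist u x \<le> D/L + \<eta>"
          using x(2) Lp by (simp add: D_def dist_commute field_simps)
        thus ?thesis using x(1) by blast
      qed
      have ne: "{x. y \<in> S x} \<noteq> {}" using key[OF etap order_refl] by blast
      have "infdist u {x. y \<in> S x} \<le> D / L"
      proof (rule field_le_epsilon)
        fix e :: real assume e: "e > 0"
        obtain x where x: "y \<in> S x" "dist u x \<le> D/L + min e \<eta>0"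
          using key[of "min e \<eta>0"] e etap by auto
        have "infdist u {x. y \<in> S x} \<le> dist u x" using x(1) by (intro infdist_le) simp
        also have "\<dots> \<le> D/L + e" using x(2) by linarith
        finally show "infdist u {x. y \<in> S x} \<le> D / L + e" .
      qed
      also have "D / L = (1/L) * D" by simp
      also have "\<dots> \<le> C * D" by (rule mult_right_mono[OF C1 D0])
      finally show ?thesis using ne idD by simp
    next
      case False
      have dc: "dist yb y = dist y yb" by (rule dist_commute)
      have dyL: "dist yb y / L \<le> \<tau> / L" using dy e2 Lp dc by (simp add: divide_right_mono)
      have "dist ub ub + dist yb y / L + \<eta>0 + dist y yb + dist yb y + L * \<eta>0 \<le> \<delta>"
        using dy e1 e2 tau_eq eta_eq dc dyL dist_self[of ub] dl by linarith
      from mr_core[OF cl c dl A L_def y0 etap this] obtain x where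
        x: "y \<in> S x" "L * dist x ub \<le> dist yb y + L * \<eta>0" by blast
      have "dist x ub \<le> \<epsilon> / L + \<eta>0"
      proof -
        have "L * dist x ub \<le> \<epsilon> + L * \<eta>0" using x(2) dy by (simp add: dist_commute)
        thus ?thesis using Lp by (simp add: field_simps)
      qed
      have ne: "{x. y \<in> S x} \<noteq> {}" using x(1) by blast
      have "infdist u {x. y \<in> S x} \<le> dist u x" using x(1) by (intro infdist_le) simp
      also have "\<dots> \<le> dist u ub + dist ub x" by (rule dist_triangle)
      also have "\<dots> \<le> \<epsilon> + \<epsilon>/L + \<eta>0" using du \<open>dist x ub \<le> \<epsilon> / L + \<eta>0\<close> by (simp add: dist_commute)
      also have "\<dots> = ((\<epsilon> + \<epsilon>/L + \<eta>0) / \<tau>) * \<tau>" using taup by simp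
      also have "\<dots> \<le> ((\<epsilon> + \<epsilon>/L + \<eta>0) / \<tau>) * D"
        using False ep etap Lp taup by (intro mult_left_mono) auto
      also have "\<dots> \<le> C * D" using D0 unfolding C_def using Lp
        by (intro mult_right_mono) auto
      finally show ?thesis using ne idD by simp
    qed
  qed
qed


definition FF :: "('a::euclidean_space \<times> 'b::euclidean_space \<Rightarrow> 'c::euclidean_space) \<Rightarrow> 'a set
     \<Rightarrow> ('b \<Rightarrow> 'd::euclidean_space set) \<Rightarrow> 'a \<times> 'b \<Rightarrow> ('a \<times> 'c \<times> 'd) set" where
  "FF \<Phi> \<Omega> T = (\<lambda>w. (\<lambda>v. (\<lambda>(x, s). (- x, \<Phi> (x, s), 0 :: 'd)) w + v) ` ((\<lambda>(x, s). \<Omega> \<times> {0 :: 'c} \<times> T s) w))"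

lemma gphF: "((x, s), (w1, w2, w3)) \<in> gph (FF \<Phi> \<Omega> T) \<longleftrightarrow> x + w1 \<in> \<Omega> \<and> w2 = \<Phi> (x, s) \<and> w3 \<in> T s"
proof
  assume "((x, s), (w1, w2, w3)) \<in> gph (FF \<Phi> \<Omega> T)"
  then obtain a z t where "a \<in> \<Omega>" "z = 0" "t \<in> T s" "(w1, w2, w3) = (- x, \<Phi> (x, s), 0) + (a, z, t)"
    by (auto simp: gph_def FF_def)
  thus "x + w1 \<in> \<Omega> \<and> w2 = \<Phi> (x, s) \<and> w3 \<in> T s" by auto
next
  assume h: "x + w1 \<in> \<Omega> \<and> w2 = \<Phi> (x, s) \<and> w3 \<in> T s"
  hence "(w1, w2, w3) = (- x, \<Phi> (x, s), 0) + (x + w1, 0, w3)" by simp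
  moreover have "(x + w1, 0, w3) \<in> \<Omega> \<times> {0} \<times> T s" using h by simp
  ultimately have "(w1, w2, w3) \<in> (\<lambda>v. (- x, \<Phi> (x, s), 0) + v) ` (\<Omega> \<times> {0} \<times> T s)"
    by (rule image_eqI)
  thus "((x, s), (w1, w2, w3)) \<in> gph (FF \<Phi> \<Omega> T)"
    unfolding gph_def FF_def by simp
qed

lemma gphF': "w \<in> gph (FF \<Phi> \<Omega> T) \<longleftrightarrow> fst (fst w) + fst (snd w) \<in> \<Omega>
    \<and> fst (snd (snd w)) = \<Phi> (fst w) \<and> snd (snd (snd w)) \<in> T (snd (fst w))"
  using gphF[of "fst (fst w)" "snd (fst w)" "fst (snd w)" "fst (snd (snd w))" "snd (snd (snd w))"]
  by simp

lemma closed_gphF: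
  assumes cont: "continuous_on UNIV \<Phi>" and cl: "closed \<Omega>" and cT: "closed (gph T)"
  shows "closed (gph (FF \<Phi> \<Omega> T))"
proof -
  have e: "gph (FF \<Phi> \<Omega> T) = (\<lambda>w. fst (fst w) + fst (snd w)) -` \<Omega>
      \<inter> {w. fst (snd (snd w)) = \<Phi> (fst w)} \<inter> (\<lambda>w. (snd (fst w), snd (snd (snd w)))) -` gph T"
    by (auto simp: gphF' gph_iff)
  have c1: "continuous_on UNIV (\<lambda>w::('a \<times> 'b) \<times> 'a \<times> 'c \<times> 'd. fst (fst w) + fst (snd w))"
    by (intro continuous_intros)
  have c2: "continuous_on UNIV (\<lambda>w::('a \<times> 'b) \<times> 'a \<times> 'c \<times> 'd. (snd (fst w), snd (snd (snd w))))"
    by (intro continuous_intros)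
  have c3: "continuous_on UNIV (\<lambda>w::('a \<times> 'b) \<times> 'a \<times> 'c \<times> 'd. \<Phi> (fst w))"
    by (rule continuous_on_compose2[OF cont]) (auto intro: continuous_intros)
  have c4: "continuous_on UNIV (\<lambda>w::('a \<times> 'b) \<times> 'a \<times> 'c \<times> 'd. fst (snd (snd w)))"
    by (intro continuous_intros)
  show ?thesis unfolding e
    by (intro closed_Int closed_vimage[OF cl c1] closed_vimage[OF cT c2] closed_Collect_eq[OF c4 c3])
qed

lemma bl_part:
  assumes "bounded_linear E"
  shows "linear (\<lambda>h. blinfun_apply B (E h))"
  using bounded_linear_compose[OF blinfun.bounded_linear_right assms] bounded_linear.linear by blast

lemma adj_inner:
  fixes E :: "'a::euclidean_space \<Rightarrow> 'x::real_normed_vector"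
  fixes B :: "'x \<Rightarrow>\<^sub>L 'c::euclidean_space"
  assumes "bounded_linear E"
  shows "h \<bullet> adjoint (\<lambda>h. blinfun_apply B (E h)) z = blinfun_apply B (E h) \<bullet> z"
  by (rule adjoint_works[OF bl_part[OF assms]])

lemma adj_cont:
  fixes E :: "'a::euclidean_space \<Rightarrow> 'x::real_normed_vector"
  fixes D :: "'p::real_normed_vector \<Rightarrow> ('x \<Rightarrow>\<^sub>L 'c::euclidean_space)"
  assumes E: "bounded_linear E" and cD: "continuous_on UNIV D"
    and pn: "pn \<longlonglongrightarrow> p" and zn: "zn \<longlonglongrightarrow> z"
  shows "(\<lambda>n. adjoint (\<lambda>h. blinfun_apply (D (pn n)) (E h)) (zn n)) \<longlonglongrightarrow> adjoint (\<lambda>h. blinfun_apply (D p) (E h)) z"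
proof -
  have rep: "adjoint (\<lambda>h. blinfun_apply B (E h)) y = (\<Sum>b\<in>Basis. (blinfun_apply B (E b) \<bullet> y) *\<^sub>R b)" for B :: "'x \<Rightarrow>\<^sub>L 'c" and y :: 'c
  proof -
    have "adjoint (\<lambda>h. blinfun_apply B (E h)) y = (\<Sum>b\<in>Basis. (adjoint (\<lambda>h. blinfun_apply B (E h)) y \<bullet> b) *\<^sub>R b)"
      by (rule euclidean_representation[symmetric])
    also have "\<dots> = (\<Sum>b\<in>Basis. (blinfun_apply B (E b) \<bullet> y) *\<^sub>R b)"
    proof (intro sum.cong refl)
      fix b
      have "adjoint (\<lambda>h. blinfun_apply B (E h)) y \<bullet> b = blinfun_apply B (E b) \<bullet> y"
        using adj_inner[OF E, of b B y] by (simp only: inner_commute)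
      thus "(adjoint (\<lambda>h. blinfun_apply B (E h)) y \<bullet> b) *\<^sub>R b = (blinfun_apply B (E b) \<bullet> y) *\<^sub>R b"
        by simp
    qed
    finally show ?thesis .
  qed
  have Dn: "(\<lambda>n. D (pn n)) \<longlonglongrightarrow> D p"
    using cD pn by (intro isCont_tendsto_compose[where g=D]) (simp_all add: continuous_on_eq_continuous_at)
  have "(\<lambda>n. (\<Sum>b\<in>Basis. (blinfun_apply (D (pn n)) (E b) \<bullet> zn n) *\<^sub>R b)) \<longlonglongrightarrow> (\<Sum>b\<in>Basis. (blinfun_apply (D p) (E b) \<bullet> z) *\<^sub>R b)"
    by (intro tendsto_sum tendsto_scaleR tendsto_inner tendsto_const
        bounded_bilinear.tendsto[OF bounded_bilinear_blinfun_apply] Dn zn)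
  thus ?thesis by (simp add: rep)
qed

lemma vec_zero_from_inner:
  fixes g :: "'a::real_inner"
  assumes "\<And>h. g \<bullet> h \<le> 0" shows "g = 0"
  using assms[of g] by (meson inner_gt_zero_iff not_le)

lemma tendsto_inv_Suc: "(\<lambda>n. inverse (real (Suc n))) \<longlonglongrightarrow> 0"
  by (rule LIMSEQ_inverse_real_of_nat)


lemma blE1: "bounded_linear (\<lambda>h::'a::real_normed_vector. (h, 0::'b::real_normed_vector))"
  by (intro bounded_linear_Pair bounded_linear_ident bounded_linear_zero)

lemma blE2: "bounded_linear (\<lambda>h::'b::real_normed_vector. (0::'a::real_normed_vector, h))"
  by (intro bounded_linear_Pair bounded_linear_ident bounded_linear_zero)

lemma inv_Suc_facts: "\<forall>n. inverse (real (Suc n)) > 0" "(\<lambda>n. inverse (real (Suc n))) \<longlonglongrightarrow> 0"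
  by simp (rule LIMSEQ_inverse_real_of_nat)

lemma upper:
  fixes \<Phi> :: "'a::euclidean_space \<times> 'b::euclidean_space \<Rightarrow> 'c::euclidean_space"
    and T :: "'b \<Rightarrow> 'd::euclidean_space set"
  assumes hD: "(\<Phi> has_derivative blinfun_apply B) (at (x, s))"
    and w: "((x,s),(w1,w2,w3)) \<in> gph (FF \<Phi> \<Omega> T)"
    and nv: "((Vx,Vs),(y1,y2,y3)) \<in> polar (tangent_cone (gph (FF \<Phi> \<Omega> T)) ((x,s),(w1,w2,w3)))"
  shows "y1 \<in> polar (tangent_cone \<Omega> (x + w1))"
    and "Vx - y1 + adjoint (\<lambda>h. blinfun_apply B (h, 0)) y2 = 0"
    and "(Vs + adjoint (\<lambda>h. blinfun_apply B (0, h)) y2, y3) \<in> polar (tangent_cone (gph T) (s, w3))"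
proof -
  have xw: "x + w1 \<in> \<Omega>" and w2e: "w2 = \<Phi> (x, s)" and w3T: "w3 \<in> T s" using w by (auto simp: gphF)
  have pol: "((Vx,Vs),(y1,y2,y3)) \<bullet> t \<le> 0" if "t \<in> tangent_cone (gph (FF \<Phi> \<Omega> T)) ((x,s),(w1,w2,w3))" for t
    using nv that unfolding polar_def by blast
  show "y1 \<in> polar (tangent_cone \<Omega> (x + w1))"
    unfolding polar_def
  proof (intro CollectI ballI)
    fix ta assume "ta \<in> tangent_cone \<Omega> (x + w1)"
    then obtain \<tau> ws where tw: "\<forall>n. \<tau> n > 0" "\<tau> \<longlonglongrightarrow> 0" "ws \<longlonglongrightarrow> ta" "\<forall>n. x + w1 + \<tau> n *\<^sub>R ws n \<in> \<Omega>"
      unfolding tangent_cone_def by blast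
    have "((0,0),(ta,0,0)) \<in> tangent_cone (gph (FF \<Phi> \<Omega> T)) ((x,s),(w1,w2,w3))"
      unfolding tangent_cone_def
    proof (intro CollectI exI conjI allI)
      show "\<tau> n > 0" for n using tw(1) by simp
      show "\<tau> \<longlonglongrightarrow> 0" by (rule tw(2))
      show "(\<lambda>n. ((0::'a,0::'b),(ws n,0::'c,0::'d))) \<longlonglongrightarrow> ((0,0),(ta,0,0))"
        by (intro tendsto_intros tw(3))
      show "((x,s),(w1,w2,w3)) + \<tau> n *\<^sub>R ((0,0),(ws n,0,0)) \<in> gph (FF \<Phi> \<Omega> T)" for n
        using tw(4) w2e w3T by (simp add: gphF add.assoc)
    qed
    from pol[OF this] show "y1 \<bullet> ta \<le> 0" by (simp add: inner_Pair)
  qed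
  have ineq: "(Vx - y1 + adjoint (\<lambda>h. blinfun_apply B (h, 0)) y2) \<bullet> h \<le> 0" for h
  proof -
    define \<tau> where "\<tau> = (\<lambda>n. inverse (real (Suc n)))"
    have tp: "\<forall>n. \<tau> n > 0" and t0: "\<tau> \<longlonglongrightarrow> 0" unfolding \<tau>_def by (rule inv_Suc_facts)+
    define q where "q = (\<lambda>n. (\<Phi> ((x,s) + \<tau> n *\<^sub>R (h, 0)) - \<Phi> (x,s)) /\<^sub>R \<tau> n)"
    have ql: "q \<longlonglongrightarrow> blinfun_apply B (h, 0)"
      using deriv_seq[OF hD tp t0 tendsto_const[of "(h, 0::'b)"]] by (simp add: q_def)
    have tq: "\<tau> n *\<^sub>R q n = \<Phi> (x + \<tau> n *\<^sub>R h, s) - \<Phi> (x, s)" for n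
      using tp by (simp add: q_def less_imp_neq[THEN not_sym])
    have "((h,0),(-h, blinfun_apply B (h, 0), 0)) \<in> tangent_cone (gph (FF \<Phi> \<Omega> T)) ((x,s),(w1,w2,w3))"
      unfolding tangent_cone_def
    proof (intro CollectI exI conjI allI)
      show "\<tau> n > 0" for n using tp by simp
      show "\<tau> \<longlonglongrightarrow> 0" by (rule t0)
      show "(\<lambda>n. ((h,0::'b),(-h,q n,0::'d))) \<longlonglongrightarrow> ((h,0),(-h, blinfun_apply B (h, 0), 0))"
        by (intro tendsto_intros ql)
      show "((x,s),(w1,w2,w3)) + \<tau> n *\<^sub>R ((h,0),(-h,q n,0)) \<in> gph (FF \<Phi> \<Omega> T)" for n
      proof -
        have "x + \<tau> n *\<^sub>R h + (w1 - \<tau> n *\<^sub>R h) = x + w1" by simp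
        thus ?thesis using xw w2e w3T tq[of n] by (simp add: gphF)
      qed
    qed
    from pol[OF this] have "Vx \<bullet> h - y1 \<bullet> h + y2 \<bullet> blinfun_apply B (h, 0) \<le> 0"
      by (simp add: inner_Pair)
    moreover have "h \<bullet> adjoint (\<lambda>h. blinfun_apply B (h, 0)) y2 = blinfun_apply B (h, 0) \<bullet> y2"
      by (rule adj_inner[OF blE1])
    ultimately show ?thesis
    proof -
      assume a1: "Vx \<bullet> h - y1 \<bullet> h + y2 \<bullet> blinfun_apply B (h, 0) \<le> 0"
        and a2: "h \<bullet> adjoint (\<lambda>h. blinfun_apply B (h, 0)) y2 = blinfun_apply B (h, 0) \<bullet> y2"
      have "(Vx - y1 + adjoint (\<lambda>h. blinfun_apply B (h, 0)) y2) \<bullet> h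
          = Vx \<bullet> h - y1 \<bullet> h + h \<bullet> adjoint (\<lambda>h. blinfun_apply B (h, 0)) y2"
        by (simp add: inner_diff_left inner_add_left inner_diff_right inner_add_right inner_commute)
      also have "\<dots> = Vx \<bullet> h - y1 \<bullet> h + y2 \<bullet> blinfun_apply B (h, 0)"
        using a2 by (simp add: inner_commute)
      finally show ?thesis using a1 by linarith
    qed
  qed
  show "Vx - y1 + adjoint (\<lambda>h. blinfun_apply B (h, 0)) y2 = 0"
    by (rule vec_zero_from_inner[OF ineq])
  show "(Vs + adjoint (\<lambda>h. blinfun_apply B (0, h)) y2, y3) \<in> polar (tangent_cone (gph T) (s, w3))"
    unfolding polar_def
  proof (intro CollectI ballI)
    fix t assume "t \<in> tangent_cone (gph T) (s, w3)"
    then obtain \<tau> ws where tw: "\<forall>n. \<tau> n > 0" "\<tau> \<longlonglongrightarrow> 0" "ws \<longlonglongrightarrow> t" "\<forall>n. (s, w3) + \<tau> n *\<^sub>R ws n \<in> gph T"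
      unfolding tangent_cone_def by blast
    define q where "q = (\<lambda>n. (\<Phi> ((x,s) + \<tau> n *\<^sub>R (0, fst (ws n))) - \<Phi> (x,s)) /\<^sub>R \<tau> n)"
    have hl: "(\<lambda>n. (0::'a, fst (ws n))) \<longlonglongrightarrow> (0, fst t)" by (intro tendsto_intros tw(3))
    have ql: "q \<longlonglongrightarrow> blinfun_apply B (0, fst t)"
      using deriv_seq[OF hD tw(1,2) hl] by (simp add: q_def)
    have tq: "\<tau> n *\<^sub>R q n = \<Phi> (x, s + \<tau> n *\<^sub>R fst (ws n)) - \<Phi> (x, s)" for n
      using tw(1) by (simp add: q_def less_imp_neq[THEN not_sym])
    have "((0, fst t),(0, blinfun_apply B (0, fst t), snd t)) \<in> tangent_cone (gph (FF \<Phi> \<Omega> T)) ((x,s),(w1,w2,w3))"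
      unfolding tangent_cone_def
    proof (intro CollectI exI conjI allI)
      show "\<tau> n > 0" for n using tw(1) by simp
      show "\<tau> \<longlonglongrightarrow> 0" by (rule tw(2))
      show "(\<lambda>n. ((0::'a, fst (ws n)),(0::'a,q n,snd (ws n)))) \<longlonglongrightarrow> ((0, fst t),(0, blinfun_apply B (0, fst t), snd t))"
        by (intro tendsto_intros ql tw(3))
      show "((x,s),(w1,w2,w3)) + \<tau> n *\<^sub>R ((0, fst (ws n)),(0,q n,snd (ws n))) \<in> gph (FF \<Phi> \<Omega> T)" for n
      proof -
        have "(s + \<tau> n *\<^sub>R fst (ws n), w3 + \<tau> n *\<^sub>R snd (ws n)) \<in> gph T"
          using tw(4)[rule_format, of n] by (cases "ws n") simp
        hence "w3 + \<tau> n *\<^sub>R snd (ws n) \<in> T (s + \<tau> n *\<^sub>R fst (ws n))" by (simp add: gph_iff)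
        thus ?thesis using xw w2e tq[of n] by (simp add: gphF)
      qed
    qed
    from pol[OF this] have "Vs \<bullet> fst t + y2 \<bullet> blinfun_apply B (0, fst t) + y3 \<bullet> snd t \<le> 0"
      by (simp add: inner_Pair)
    moreover have "fst t \<bullet> adjoint (\<lambda>h. blinfun_apply B (0, h)) y2 = blinfun_apply B (0, fst t) \<bullet> y2"
      by (rule adj_inner[OF blE2])
    ultimately show "(Vs + adjoint (\<lambda>h. blinfun_apply B (0, h)) y2, y3) \<bullet> t \<le> 0"
    proof -
      assume a1: "Vs \<bullet> fst t + y2 \<bullet> blinfun_apply B (0, fst t) + y3 \<bullet> snd t \<le> 0"
        and a2: "fst t \<bullet> adjoint (\<lambda>h. blinfun_apply B (0, h)) y2 = blinfun_apply B (0, fst t) \<bullet> y2"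
      have "(Vs + adjoint (\<lambda>h. blinfun_apply B (0, h)) y2, y3) \<bullet> t
          = Vs \<bullet> fst t + fst t \<bullet> adjoint (\<lambda>h. blinfun_apply B (0, h)) y2 + y3 \<bullet> snd t"
        by (cases t) (simp add: inner_Pair inner_add_left inner_add_right inner_commute)
      also have "\<dots> = Vs \<bullet> fst t + y2 \<bullet> blinfun_apply B (0, fst t) + y3 \<bullet> snd t"
        using a2 by (simp add: inner_commute)
      finally show ?thesis using a1 by linarith
    qed
  qed
qed


lemma lower:
  fixes \<Phi> :: "'a::euclidean_space \<times> 'b::euclidean_space \<Rightarrow> 'c::euclidean_space"
    and T :: "'b \<Rightarrow> 'd::euclidean_space set"
  assumes hD: "(\<Phi> has_derivative blinfun_apply B) (at (x, s))"
    and xw: "x + w1 \<in> \<Omega>" and ts: "t \<in> T s"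
    and y1: "y1 \<in> polar (tangent_cone \<Omega> (x + w1))"
    and qr: "(q, r) \<in> polar (tangent_cone (gph T) (s, t))"
  shows "((y1 - adjoint (\<lambda>h. blinfun_apply B (h, 0)) y2, q - adjoint (\<lambda>h. blinfun_apply B (0, h)) y2), (y1, y2, r))
     \<in> polar (tangent_cone (gph (FF \<Phi> \<Omega> T)) ((x,s),(w1, \<Phi> (x,s), t)))"
  unfolding polar_def
proof (intro CollectI ballI)
  fix V assume V: "V \<in> tangent_cone (gph (FF \<Phi> \<Omega> T)) ((x,s),(w1, \<Phi> (x,s), t))"
  then obtain \<tau> ws where tw: "\<forall>n. \<tau> n > 0" "\<tau> \<longlonglongrightarrow> 0" "ws \<longlonglongrightarrow> V"
    "\<forall>n. ((x,s),(w1, \<Phi> (x,s), t)) + \<tau> n *\<^sub>R ws n \<in> gph (FF \<Phi> \<Omega> T)"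
    unfolding tangent_cone_def by blast
  obtain hx hs t1 t2 t3 where Veq: "V = ((hx,hs),(t1,t2,t3))" by (metis prod.collapse)
  define HX where "HX = (\<lambda>n. fst (fst (ws n)))"
  define HS where "HS = (\<lambda>n. snd (fst (ws n)))"
  define T1 where "T1 = (\<lambda>n. fst (snd (ws n)))"
  define T2 where "T2 = (\<lambda>n. fst (snd (snd (ws n))))"
  define T3 where "T3 = (\<lambda>n. snd (snd (snd (ws n))))"
  have wseq: "ws n = ((HX n, HS n),(T1 n, T2 n, T3 n))" for n
    by (simp add: HX_def HS_def T1_def T2_def T3_def)
  have lHX: "HX \<longlonglongrightarrow> hx" unfolding HX_def using tendsto_fst[OF tendsto_fst[OF tw(3)]] Veq by simp
  have lHS: "HS \<longlonglongrightarrow> hs" unfolding HS_def using tendsto_snd[OF tendsto_fst[OF tw(3)]] Veq by simp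
  have lT1: "T1 \<longlonglongrightarrow> t1" unfolding T1_def using tendsto_fst[OF tendsto_snd[OF tw(3)]] Veq by simp
  have lT2: "T2 \<longlonglongrightarrow> t2" unfolding T2_def using tendsto_fst[OF tendsto_snd[OF tendsto_snd[OF tw(3)]]] Veq by simp
  have lT3: "T3 \<longlonglongrightarrow> t3" unfolding T3_def using tendsto_snd[OF tendsto_snd[OF tendsto_snd[OF tw(3)]]] Veq by simp
  have mem: "x + \<tau> n *\<^sub>R HX n + (w1 + \<tau> n *\<^sub>R T1 n) \<in> \<Omega>
      \<and> \<Phi> (x,s) + \<tau> n *\<^sub>R T2 n = \<Phi> (x + \<tau> n *\<^sub>R HX n, s + \<tau> n *\<^sub>R HS n)
      \<and> t + \<tau> n *\<^sub>R T3 n \<in> T (s + \<tau> n *\<^sub>R HS n)" for n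
    using tw(4)[rule_format, of n] unfolding wseq by (simp add: gphF)
  have tO: "hx + t1 \<in> tangent_cone \<Omega> (x + w1)"
    unfolding tangent_cone_def
  proof (intro CollectI exI conjI allI)
    show "\<tau> n > 0" for n using tw(1) by simp
    show "\<tau> \<longlonglongrightarrow> 0" by (rule tw(2))
    show "(\<lambda>n. HX n + T1 n) \<longlonglongrightarrow> hx + t1" by (intro tendsto_intros lHX lT1)
    show "x + w1 + \<tau> n *\<^sub>R (HX n + T1 n) \<in> \<Omega>" for n
    proof -
      have eq: "x + w1 + \<tau> n *\<^sub>R (HX n + T1 n) = x + \<tau> n *\<^sub>R HX n + (w1 + \<tau> n *\<^sub>R T1 n)"
        by (simp add: scaleR_right_distrib algebra_simps)
      have m: "x + \<tau> n *\<^sub>R HX n + (w1 + \<tau> n *\<^sub>R T1 n) \<in> \<Omega>" using mem[of n] by blast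
      show ?thesis unfolding eq by (rule m)
    qed
  qed
  have i1: "y1 \<bullet> (hx + t1) \<le> 0" using y1 tO unfolding polar_def by blast
  have tT: "(hs, t3) \<in> tangent_cone (gph T) (s, t)"
    unfolding tangent_cone_def
  proof (intro CollectI exI conjI allI)
    show "\<tau> n > 0" for n using tw(1) by simp
    show "\<tau> \<longlonglongrightarrow> 0" by (rule tw(2))
    show "(\<lambda>n. (HS n, T3 n)) \<longlonglongrightarrow> (hs, t3)" by (intro tendsto_intros lHS lT3)
    show "(s, t) + \<tau> n *\<^sub>R (HS n, T3 n) \<in> gph T" for n
      using mem[of n] by (simp add: gph_iff)
  qed
  have i2: "(q, r) \<bullet> (hs, t3) \<le> 0" using qr tT unfolding polar_def by blast
  have T2eq: "T2 n = (\<Phi> ((x,s) + \<tau> n *\<^sub>R (HX n, HS n)) - \<Phi> (x,s)) /\<^sub>R \<tau> n" for n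
  proof -
    have eq: "\<tau> n *\<^sub>R T2 n = \<Phi> (x + \<tau> n *\<^sub>R HX n, s + \<tau> n *\<^sub>R HS n) - \<Phi> (x,s)"
      using mem[of n] by (simp add: algebra_simps)
    have tn: "\<tau> n \<noteq> 0" using tw(1) by (simp add: less_imp_neq[THEN not_sym])
    have "T2 n = inverse (\<tau> n) *\<^sub>R (\<tau> n *\<^sub>R T2 n)" using tn by simp
    also have "\<dots> = (\<Phi> ((x,s) + \<tau> n *\<^sub>R (HX n, HS n)) - \<Phi> (x,s)) /\<^sub>R \<tau> n"
      unfolding eq by simp
    finally show ?thesis .
  qed
  have lP: "(\<lambda>n. (HX n, HS n)) \<longlonglongrightarrow> (hx, hs)" by (intro tendsto_intros lHX lHS)
  have "T2 \<longlonglongrightarrow> blinfun_apply B (hx, hs)"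
    using deriv_seq[OF hD tw(1,2) lP] by (simp add: T2eq[abs_def])
  hence t2e: "t2 = blinfun_apply B (hx, hs)" using lT2 LIMSEQ_unique by blast
  have Bsplit: "blinfun_apply B (hx, hs) = blinfun_apply B (hx, 0) + blinfun_apply B (0, hs)"
    by (simp add: blinfun.add_right[symmetric])
  have a1: "hx \<bullet> adjoint (\<lambda>h. blinfun_apply B (h, 0)) y2 = blinfun_apply B (hx, 0) \<bullet> y2"
    by (rule adj_inner[OF blE1])
  have a2: "hs \<bullet> adjoint (\<lambda>h. blinfun_apply B (0, h)) y2 = blinfun_apply B (0, hs) \<bullet> y2"
    by (rule adj_inner[OF blE2])
  have "((y1 - adjoint (\<lambda>h. blinfun_apply B (h, 0)) y2, q - adjoint (\<lambda>h. blinfun_apply B (0, h)) y2), (y1, y2, r)) \<bullet> V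
      = y1 \<bullet> hx - hx \<bullet> adjoint (\<lambda>h. blinfun_apply B (h, 0)) y2 + q \<bullet> hs
        - hs \<bullet> adjoint (\<lambda>h. blinfun_apply B (0, h)) y2 + y1 \<bullet> t1 + y2 \<bullet> t2 + r \<bullet> t3"
    unfolding Veq by (simp add: inner_Pair inner_diff_left inner_diff_right inner_commute)
  also have "\<dots> = y1 \<bullet> (hx + t1) + (q, r) \<bullet> (hs, t3)"
    unfolding a1 a2 t2e Bsplit by (simp add: inner_Pair inner_add_left inner_add_right inner_commute)
  also have "\<dots> \<le> 0" using i1 i2 by linarith
  finally show "((y1 - adjoint (\<lambda>h. blinfun_apply B (h, 0)) y2, q - adjoint (\<lambda>h. blinfun_apply B (0, h)) y2), (y1, y2, r)) \<bullet> V \<le> 0" .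
qed


lemma zero_in_normal: "x \<in> Z \<Longrightarrow> 0 \<in> normal_cone Z x"
  unfolding normal_cone_def
  by (intro CollectI exI[of _ "\<lambda>n. x"] exI[of _ "\<lambda>n. 0"]) auto

theorem proposition5:
  fixes \<Phi> :: "(real^('k::finite)) \<times> (real^('l::finite)) \<Rightarrow> real^('p::finite)"
    and \<Omega> :: "(real^'k) set"
    and T :: "real^'l \<Rightarrow> (real^('q::finite)) set"
    and xb :: "real^'k" and sb :: "real^'l"
  assumes C1: "C1_map \<Phi>"
    and cl: "closed \<Omega>"
    and osc: "outer_semicontinuous T"
    and zero: "\<Phi> (xb, sb) = 0"
    and xbin: "xb \<in> \<Omega>"
    and Tb: "0 \<in> T sb"
  defines "G \<equiv> (\<lambda>(x, s). (- x, \<Phi> (x, s), 0 :: real^'q))"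
    and "P \<equiv> (\<lambda>(x, s). \<Omega> \<times> {0 :: real^'p} \<times> T s)"
  shows
    "(metric_regular (\<lambda>w. (\<lambda>v. G w + v) ` P w) (xb, sb) 0
       \<longleftrightarrow> (\<forall>z \<nu>. - grad_x \<Phi> xb sb z \<in> normal_cone \<Omega> xb
                    \<and> - grad_s \<Phi> xb sb z \<in> coderiv T sb 0 \<nu> \<longrightarrow> z = 0 \<and> \<nu> = 0))
   \<and> (metric_regular (\<lambda>w. (\<lambda>v. G w + v) ` P w) (xb, sb) 0
       \<longleftrightarrow> metric_regular T sb 0
           \<and> (\<forall>z. - grad_x \<Phi> xb sb z \<in> normal_cone \<Omega> xb
                    \<and> - grad_s \<Phi> xb sb z \<in> coderiv_range T sb 0 \<longrightarrow> z = 0))"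
proof -
  obtain D where hasD: "\<forall>w. (\<Phi> has_derivative blinfun_apply (D w)) (at w)" and cD: "continuous_on UNIV D"
    using C1 unfolding C1_map_def by blast
  have fd: "frechet_derivative \<Phi> (at w) = blinfun_apply (D w)" for w
    using frechet_derivative_at[OF hasD[rule_format, of w]] by simp
  define gx where "gx = (\<lambda>p. adjoint (\<lambda>h. blinfun_apply (D p) (h, 0::real^'l)))"
  define gs where "gs = (\<lambda>p. adjoint (\<lambda>h. blinfun_apply (D p) (0::real^'k, h)))"
  have gxe: "grad_x \<Phi> x s = gx (x, s)" for x s unfolding grad_x_def fd gx_def ..
  have gse: "grad_s \<Phi> x s = gs (x, s)" for x s unfolding grad_s_def fd gs_def ..
  have lgx: "linear (gx p)" for p unfolding gx_def by (intro adjoint_linear bl_part blE1)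
  have lgs: "linear (gs p)" for p unfolding gs_def by (intro adjoint_linear bl_part blE2)
  have contPhi: "continuous_on UNIV \<Phi>"
    unfolding continuous_on_eq_continuous_at[OF open_UNIV]
    using has_derivative_continuous[OF hasD[rule_format]] by blast
  have Feq: "(\<lambda>w. (\<lambda>v. G w + v) ` P w) = FF \<Phi> \<Omega> T" unfolding G_def P_def FF_def ..
  have clT: "closed (gph T)" using osc unfolding outer_semicontinuous_def .
  have clF: "closed (gph (FF \<Phi> \<Omega> T))" by (rule closed_gphF[OF contPhi cl clT])
  have in0: "0 \<in> FF \<Phi> \<Omega> T (xb, sb)"
  proof -
    have "((xb, sb), (0, 0, 0)) \<in> gph (FF \<Phi> \<Omega> T)" using xbin zero Tb by (simp add: gphF)
    thus ?thesis by (simp add: gph_iff zero_prod_def)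
  qed
  define KF where "KF \<longleftrightarrow> (\<forall>Y. (0, Y) \<in> normal_cone (gph (FF \<Phi> \<Omega> T)) ((xb, sb), 0) \<longrightarrow> Y = 0)"
  define KT where "KT \<longleftrightarrow> (\<forall>\<nu>. (0, \<nu>) \<in> normal_cone (gph T) (sb, 0) \<longrightarrow> \<nu> = 0)"
  define BB where "BB \<longleftrightarrow> (\<forall>z \<nu>. - grad_x \<Phi> xb sb z \<in> normal_cone \<Omega> xb
                    \<and> - grad_s \<Phi> xb sb z \<in> coderiv T sb 0 \<nu> \<longrightarrow> z = 0 \<and> \<nu> = 0)"
  have MA: "metric_regular (FF \<Phi> \<Omega> T) (xb, sb) 0 \<longleftrightarrow> KF"
  proof
    assume "metric_regular (FF \<Phi> \<Omega> T) (xb, sb) 0"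
    thus KF unfolding KF_def using mr_nec[OF clF] by blast
  next
    assume KF thus "metric_regular (FF \<Phi> \<Omega> T) (xb, sb) 0"
      unfolding KF_def by (intro mr_suff[OF clF in0]) blast
  qed
  have MT: "metric_regular T sb 0 \<longleftrightarrow> KT"
  proof
    assume "metric_regular T sb 0"
    thus KT unfolding KT_def using mr_nec[OF clT] by blast
  next
    assume KT thus "metric_regular T sb 0"
      unfolding KT_def by (intro mr_suff[OF clT Tb]) blast
  qed
  have isP: "isCont \<Phi> (xb, sb)" using contPhi by (simp add: continuous_on_eq_continuous_at)
  have KB: "KF \<longleftrightarrow> BB"
  proof
    assume KF
    show BB unfolding BB_def
    proof (intro allI impI)
      fix z \<nu> assume h: "- grad_x \<Phi> xb sb z \<in> normal_cone \<Omega> xb \<and> - grad_s \<Phi> xb sb z \<in> coderiv T sb 0 \<nu>"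
      have hN: "- gx (xb,sb) z \<in> normal_cone \<Omega> xb" using h by (simp add: gxe)
      have hT: "(- gs (xb,sb) z, - \<nu>) \<in> normal_cone (gph T) (sb, 0)" using h by (simp add: gse coderiv_def)
      obtain as ns where a: "\<forall>n. as n \<in> \<Omega>" "as \<longlonglongrightarrow> xb" "ns \<longlonglongrightarrow> - gx (xb,sb) z"
          "\<forall>n. ns n \<in> polar (tangent_cone \<Omega> (as n))"
        using hN unfolding normal_cone_def by blast
      obtain ps ms where b: "\<forall>n. ps n \<in> gph T" "ps \<longlonglongrightarrow> (sb, 0)" "ms \<longlonglongrightarrow> (- gs (xb,sb) z, - \<nu>)"
          "\<forall>n. ms n \<in> polar (tangent_cone (gph T) (ps n))"
        using hT unfolding normal_cone_def by blast
      define pn where "pn = (\<lambda>n. (xb, fst (ps n)))"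
      have fpl: "(\<lambda>n. fst (ps n)) \<longlonglongrightarrow> sb" using tendsto_fst[OF b(2)] by simp
      have spl: "(\<lambda>n. snd (ps n)) \<longlonglongrightarrow> 0" using tendsto_snd[OF b(2)] by simp
      have pnl: "pn \<longlonglongrightarrow> (xb, sb)" unfolding pn_def by (intro tendsto_Pair tendsto_const fpl)
      define W where "W = (\<lambda>n. (pn n, (as n - xb, \<Phi> (pn n), snd (ps n))))"
      define N where "N = (\<lambda>n. ((ns n - gx (pn n) (- z), fst (ms n) - gs (pn n) (- z)), (ns n, - z, snd (ms n))))"
      have Wg: "W n \<in> gph (FF \<Phi> \<Omega> T)" for n
      proof -
        have "snd (ps n) \<in> T (fst (ps n))" using b(1) gph_iff[of "fst (ps n)" "snd (ps n)" T] by simp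
        thus ?thesis using a(1) by (simp add: W_def pn_def gphF)
      qed
      have Np: "N n \<in> polar (tangent_cone (gph (FF \<Phi> \<Omega> T)) (W n))" for n
      proof -
        have p2: "xb + (as n - xb) \<in> \<Omega>" using a(1) by simp
        have p3: "snd (ps n) \<in> T (fst (ps n))" using b(1) gph_iff[of "fst (ps n)" "snd (ps n)" T] by simp
        have p4: "ns n \<in> polar (tangent_cone \<Omega> (xb + (as n - xb)))" using a(4) by simp
        have p5: "(fst (ms n), snd (ms n)) \<in> polar (tangent_cone (gph T) (fst (ps n), snd (ps n)))"
          using b(4) by simp
        from lower[OF hasD[rule_format, of "(xb, fst (ps n))"] p2 p3 p4 p5, of "- z"]
        show ?thesis by (simp add: N_def W_def pn_def gx_def gs_def)
      qed
      have Phl: "(\<lambda>n. \<Phi> (pn n)) \<longlonglongrightarrow> \<Phi> (xb, sb)" by (rule isCont_tendsto_compose[OF isP pnl])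
      have "W \<longlonglongrightarrow> ((xb, sb), (xb - xb, \<Phi> (xb, sb), 0))"
        unfolding W_def by (intro tendsto_Pair tendsto_diff pnl a(2) tendsto_const Phl spl)
      hence Wl: "W \<longlonglongrightarrow> ((xb, sb), 0)" using zero by (simp add: zero_prod_def)
      have gxl: "(\<lambda>n. gx (pn n) (- z)) \<longlonglongrightarrow> gx (xb, sb) (- z)"
        unfolding gx_def by (rule adj_cont[OF blE1 cD pnl tendsto_const])
      have gsl: "(\<lambda>n. gs (pn n) (- z)) \<longlonglongrightarrow> gs (xb, sb) (- z)"
        unfolding gs_def by (rule adj_cont[OF blE2 cD pnl tendsto_const])
      have fml: "(\<lambda>n. fst (ms n)) \<longlonglongrightarrow> - gs (xb,sb) z" using tendsto_fst[OF b(3)] by simp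
      have sml: "(\<lambda>n. snd (ms n)) \<longlonglongrightarrow> - \<nu>" using tendsto_snd[OF b(3)] by simp
      have "N \<longlonglongrightarrow> ((- gx (xb,sb) z - gx (xb, sb) (- z), - gs (xb,sb) z - gs (xb, sb) (- z)),
                   (- gx (xb,sb) z, - z, - \<nu>))"
        unfolding N_def by (intro tendsto_Pair tendsto_diff a(3) gxl fml gsl tendsto_const sml)
      hence Nl: "N \<longlonglongrightarrow> (0, (- gx (xb,sb) z, - z, - \<nu>))"
        by (simp add: linear_neg[OF lgx] linear_neg[OF lgs] zero_prod_def)
      have "(0, (- gx (xb,sb) z, - z, - \<nu>)) \<in> normal_cone (gph (FF \<Phi> \<Omega> T)) ((xb, sb), 0)"
        unfolding normal_cone_def using Wg Np Wl Nl by blast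
      hence "(- gx (xb,sb) z, - z, - \<nu>) = 0" using \<open>KF\<close> unfolding KF_def by blast
      thus "z = 0 \<and> \<nu> = 0" by (simp add: zero_prod_def)
    qed
  next
    assume B: BB
    show KF unfolding KF_def
    proof (intro allI impI)
      fix Y assume hY: "(0, Y) \<in> normal_cone (gph (FF \<Phi> \<Omega> T)) ((xb, sb), 0)"
      obtain y1 y2 y3 where Yeq: "Y = (y1, y2, y3)" by (metis prod.collapse)
      obtain ws vs where c: "\<forall>n. ws n \<in> gph (FF \<Phi> \<Omega> T)" "ws \<longlonglongrightarrow> ((xb, sb), 0)" "vs \<longlonglongrightarrow> (0, Y)"
          "\<forall>n. vs n \<in> polar (tangent_cone (gph (FF \<Phi> \<Omega> T)) (ws n))"
        using hY unfolding normal_cone_def by blast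
      define X where "X = (\<lambda>n. fst (fst (ws n)))"
      define Sg where "Sg = (\<lambda>n. snd (fst (ws n)))"
      define W1 where "W1 = (\<lambda>n. fst (snd (ws n)))"
      define W2 where "W2 = (\<lambda>n. fst (snd (snd (ws n))))"
      define W3 where "W3 = (\<lambda>n. snd (snd (snd (ws n))))"
      define VX where "VX = (\<lambda>n. fst (fst (vs n)))"
      define VS where "VS = (\<lambda>n. snd (fst (vs n)))"
      define Y1 where "Y1 = (\<lambda>n. fst (snd (vs n)))"
      define Y2 where "Y2 = (\<lambda>n. fst (snd (snd (vs n))))"
      define Y3 where "Y3 = (\<lambda>n. snd (snd (snd (vs n))))"
      have wseq: "ws n = ((X n, Sg n), (W1 n, W2 n, W3 n))" for n
        by (simp add: X_def Sg_def W1_def W2_def W3_def)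
      have vseq: "vs n = ((VX n, VS n), (Y1 n, Y2 n, Y3 n))" for n
        by (simp add: VX_def VS_def Y1_def Y2_def Y3_def)
      have c2: "ws \<longlonglongrightarrow> ((xb, sb), (0, 0, 0))" using c(2) by (simp add: zero_prod_def)
      have c3: "vs \<longlonglongrightarrow> ((0, 0), (y1, y2, y3))" using c(3) Yeq by (simp add: zero_prod_def)
      have lX: "X \<longlonglongrightarrow> xb" unfolding X_def using tendsto_fst[OF tendsto_fst[OF c2]] by simp
      have lS: "Sg \<longlonglongrightarrow> sb" unfolding Sg_def using tendsto_snd[OF tendsto_fst[OF c2]] by simp
      have lW1: "W1 \<longlonglongrightarrow> 0" unfolding W1_def using tendsto_fst[OF tendsto_snd[OF c2]] by simp
      have lW3: "W3 \<longlonglongrightarrow> 0" unfolding W3_def using tendsto_snd[OF tendsto_snd[OF tendsto_snd[OF c2]]] by simp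
      have lVX: "VX \<longlonglongrightarrow> 0" unfolding VX_def using tendsto_fst[OF tendsto_fst[OF c3]] by simp
      have lVS: "VS \<longlonglongrightarrow> 0" unfolding VS_def using tendsto_snd[OF tendsto_fst[OF c3]] by simp
      have lY1: "Y1 \<longlonglongrightarrow> y1" unfolding Y1_def using tendsto_fst[OF tendsto_snd[OF c3]] by simp
      have lY2: "Y2 \<longlonglongrightarrow> y2" unfolding Y2_def using tendsto_fst[OF tendsto_snd[OF tendsto_snd[OF c3]]] by simp
      have lY3: "Y3 \<longlonglongrightarrow> y3" unfolding Y3_def using tendsto_snd[OF tendsto_snd[OF tendsto_snd[OF c3]]] by simp
      have wg: "((X n, Sg n), (W1 n, W2 n, W3 n)) \<in> gph (FF \<Phi> \<Omega> T)" for n using c(1) wseq by metis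
      have vp: "((VX n, VS n), (Y1 n, Y2 n, Y3 n)) \<in> polar (tangent_cone (gph (FF \<Phi> \<Omega> T)) ((X n, Sg n), (W1 n, W2 n, W3 n)))" for n
        using c(4) wseq vseq by metis
      have U1: "Y1 n \<in> polar (tangent_cone \<Omega> (X n + W1 n))" for n
        by (rule upper(1)[OF hasD[rule_format, of "(X n, Sg n)"] wg vp])
      have U2: "VX n - Y1 n + adjoint (\<lambda>h. blinfun_apply (D (X n, Sg n)) (h, 0)) (Y2 n) = 0" for n
        by (rule upper(2)[OF hasD[rule_format, of "(X n, Sg n)"] wg vp])
      have U3: "(VS n + adjoint (\<lambda>h. blinfun_apply (D (X n, Sg n)) (0, h)) (Y2 n), Y3 n)
          \<in> polar (tangent_cone (gph T) (Sg n, W3 n))" for n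
        by (rule upper(3)[OF hasD[rule_format, of "(X n, Sg n)"] wg vp])
      have m1: "X n + W1 n \<in> \<Omega>" and m3: "W3 n \<in> T (Sg n)" for n using wg[of n] by (simp_all add: gphF)
      have pl: "(\<lambda>n. (X n, Sg n)) \<longlonglongrightarrow> (xb, sb)" by (intro tendsto_Pair lX lS)
      have gxl: "(\<lambda>n. gx (X n, Sg n) (Y2 n)) \<longlonglongrightarrow> gx (xb, sb) y2"
        unfolding gx_def by (rule adj_cont[OF blE1 cD pl lY2])
      have gsl: "(\<lambda>n. gs (X n, Sg n) (Y2 n)) \<longlonglongrightarrow> gs (xb, sb) y2"
        unfolding gs_def by (rule adj_cont[OF blE2 cD pl lY2])
      have n1: "y1 \<in> normal_cone \<Omega> xb"
      proof -
        have "(\<lambda>n. X n + W1 n) \<longlonglongrightarrow> xb + 0" by (intro tendsto_add lX lW1)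
        moreover have "\<forall>n. Y1 n \<in> polar (tangent_cone \<Omega> (X n + W1 n))" using U1 by blast
        ultimately show ?thesis unfolding normal_cone_def using m1 lY1
          by (intro CollectI exI[of _ "\<lambda>n. X n + W1 n"] exI[of _ Y1]) auto
      qed
      have "Y1 n = VX n + gx (X n, Sg n) (Y2 n)" for n
        using U2[of n] unfolding gx_def by (simp add: algebra_simps)
      hence Y1eq: "Y1 = (\<lambda>n. VX n + gx (X n, Sg n) (Y2 n))" by (simp add: fun_eq_iff)
      have "Y1 \<longlonglongrightarrow> 0 + gx (xb, sb) y2"
        unfolding Y1eq by (rule tendsto_add[OF lVX gxl])
      hence e1: "y1 = gx (xb, sb) y2" using lY1 LIMSEQ_unique by fastforce
      have n2: "(gs (xb, sb) y2, y3) \<in> normal_cone (gph T) (sb, 0)"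
      proof -
        have "(\<lambda>n. (Sg n, W3 n)) \<longlonglongrightarrow> (sb, 0)" by (intro tendsto_Pair lS lW3)
        moreover have "(\<lambda>n. (VS n + gs (X n, Sg n) (Y2 n), Y3 n)) \<longlonglongrightarrow> (0 + gs (xb, sb) y2, y3)"
          by (intro tendsto_Pair tendsto_add lVS gsl lY3)
        moreover have "\<forall>n. (VS n + gs (X n, Sg n) (Y2 n), Y3 n) \<in> polar (tangent_cone (gph T) (Sg n, W3 n))"
          using U3 unfolding gs_def by blast
        moreover have "\<forall>n. (Sg n, W3 n) \<in> gph T" using m3 by (simp add: gph_iff)
        ultimately show ?thesis unfolding normal_cone_def
          by (intro CollectI exI[of _ "\<lambda>n. (Sg n, W3 n)"] exI[of _ "\<lambda>n. (VS n + gs (X n, Sg n) (Y2 n), Y3 n)"]) auto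
      qed
      have "- grad_x \<Phi> xb sb (- y2) \<in> normal_cone \<Omega> xb"
        using n1 e1 by (simp add: gxe linear_neg[OF lgx])
      moreover have "- grad_s \<Phi> xb sb (- y2) \<in> coderiv T sb 0 (- y3)"
        using n2 by (simp add: gse linear_neg[OF lgs] coderiv_def)
      ultimately have "- y2 = 0 \<and> - y3 = 0" using B unfolding BB_def by blast
      hence "y2 = 0" "y3 = 0" by simp_all
      moreover have "y1 = 0" using e1 \<open>y2 = 0\<close> by (simp add: linear_0[OF lgx])
      ultimately show "Y = 0" using Yeq by (simp add: zero_prod_def)
    qed
  qed
  have BC: "BB \<longleftrightarrow> KT \<and> (\<forall>z. - grad_x \<Phi> xb sb z \<in> normal_cone \<Omega> xb
                    \<and> - grad_s \<Phi> xb sb z \<in> coderiv_range T sb 0 \<longrightarrow> z = 0)"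
  proof
    assume B: BB
    have "KT" unfolding KT_def
    proof (intro allI impI)
      fix \<nu> assume h: "(0, \<nu>) \<in> normal_cone (gph T) (sb, 0)"
      have "- grad_x \<Phi> xb sb 0 \<in> normal_cone \<Omega> xb"
        using zero_in_normal[OF xbin] by (simp add: gxe linear_0[OF lgx])
      moreover have "- grad_s \<Phi> xb sb 0 \<in> coderiv T sb 0 (- \<nu>)"
        using h by (simp add: gse linear_0[OF lgs] coderiv_def)
      ultimately show "\<nu> = 0" using B unfolding BB_def by (metis neg_equal_0_iff_equal)
    qed
    moreover have "\<forall>z. - grad_x \<Phi> xb sb z \<in> normal_cone \<Omega> xb
                    \<and> - grad_s \<Phi> xb sb z \<in> coderiv_range T sb 0 \<longrightarrow> z = 0"
      using B unfolding BB_def coderiv_range_def by blast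
    ultimately show "KT \<and> (\<forall>z. - grad_x \<Phi> xb sb z \<in> normal_cone \<Omega> xb
                    \<and> - grad_s \<Phi> xb sb z \<in> coderiv_range T sb 0 \<longrightarrow> z = 0)" by blast
  next
    assume C: "KT \<and> (\<forall>z. - grad_x \<Phi> xb sb z \<in> normal_cone \<Omega> xb
                    \<and> - grad_s \<Phi> xb sb z \<in> coderiv_range T sb 0 \<longrightarrow> z = 0)"
    show BB unfolding BB_def
    proof (intro allI impI)
      fix z \<nu> assume h: "- grad_x \<Phi> xb sb z \<in> normal_cone \<Omega> xb \<and> - grad_s \<Phi> xb sb z \<in> coderiv T sb 0 \<nu>"
      hence z0: "z = 0" using C unfolding coderiv_range_def by blast
      hence "(0, - \<nu>) \<in> normal_cone (gph T) (sb, 0)"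
        using h by (simp add: gse linear_0[OF lgs] coderiv_def)
      hence "- \<nu> = 0" using C unfolding KT_def by blast
      thus "z = 0 \<and> \<nu> = 0" using z0 by simp
    qed
  qed
  show ?thesis unfolding Feq MA MT using KB BC unfolding BB_def by blast
qed


end
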